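(* Suppose Assumptions A1 and A2 hold. Then for any integers $n_1\ge n_2\ge0$, the delay $\tau_{n_1}$ is independent of the channel inputs $u(n_1)$ and $u(n_2)$.
   Context: Setting. Fix $\bar\tau\ge1$ and $\mathcal{D}=\{0,\dots,\bar\tau\}$. A networked feedback system has a SISO discrete-time LTI plant $P$ with strictly proper transfer function and a SISO discrete-time LTI controller $K$ with proper transfer function. Both are relaxed (at rest) at time $0$, and all signals are zero at negative times. The plant input is $v(k)+u_d(k)$, where $v$ is the external input. The plant output is $y$, and the controller output $u=Ky$ is the channel input. The receiver output is $$u_d(k)=\sum_{i=0}^{\bar\tau}\alpha_i\delta(\tau_{k-i}-i)u(k-i),$$ with fixed real weights $\alpha_i$ and Kronecker delta $\delta$. Assumptions. - A1: $\{\tau_k\}_{k\ge0}$ is i.i.d. on $\mathcal{D}$ with $\Pr\{\tau_k=i\}=p_i$, $\sum_ip_i=1$. - A2: the input sequence $\{v(k)\}$ is independent of $\{\tau_k\}$. *)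

theory Defs
  imports "HOL-Probability.Probability" "HOL-Computational_Algebra.Polynomial_FPS"
begin

text \<open>A relaxed SISO discrete-time LTI system is described by its impulse response
  h (h k = k-th Markov parameter). Its transfer function H(z) = sum_k h k z^(-k) is a
  proper rational function iff the causal series sum_k h k w^k (w = 1/z) is a rational
  power series p(w)/q(w) with q(0) nonzero.\<close>

definition proper_tf :: "(nat \<Rightarrow> real) \<Rightarrow> bool" where
  "proper_tf h \<longleftrightarrow>
     (\<exists>p q :: real poly. coeff q 0 \<noteq> 0 \<and> Abs_fps h * fps_of_poly q = fps_of_poly p)"

text \<open>Strictly proper: proper and zero direct feedthrough (H(infinity) = h 0 = 0).\<close>
definition strictly_proper_tf :: "(nat \<Rightarrow> real) \<Rightarrow> bool" where
  "strictly_proper_tf h \<longleftrightarrow> proper_tf h \<and> h 0 = 0"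

definition lti_response :: "(nat \<Rightarrow> real) \<Rightarrow> (nat \<Rightarrow> real) \<Rightarrow> nat \<Rightarrow> real" where
  "lti_response h x k = (\<Sum>j\<le>k. h j * x (k - j))"

definition receiver_output ::
  "nat \<Rightarrow> (nat \<Rightarrow> real) \<Rightarrow> (nat \<Rightarrow> nat) \<Rightarrow> (nat \<Rightarrow> real) \<Rightarrow> nat \<Rightarrow> real" where
  "receiver_output taubar alpha tau u k =
     (\<Sum>i\<in>{0..taubar}. if i \<le> k then alpha i * (if tau (k - i) = i then 1 else 0) * u (k - i) else 0)"

end

theory Submission
  imports Defs
begin

lemma vimage_sub:
  assumes "f \<in> X \<rightarrow> space N" "g \<in> measurable N K"
  shows "sets (vimage_algebra X (\<lambda>x. g (f x)) K) \<subseteq> sets (vimage_algebra X f N)"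
proof -
  have "(\<lambda>x. g (f x)) \<in> measurable (vimage_algebra X f N) K"
    using measurable_comp[OF measurable_vimage_algebra1[OF assms(1)] assms(2)] by (simp add: comp_def)
  then show ?thesis by (intro sets_image_in_sets) simp_all
qed

lemma meas_from_sets:
  assumes "f \<in> space N \<rightarrow> space P" "sets (vimage_algebra (space N) f P) \<subseteq> sets N"
  shows "f \<in> measurable N P"
  using assms by (auto simp: measurable_def intro: in_vimage_algebra)

theorem lemma3p3:
  fixes M :: "'a measure" and taubar :: nat and p :: "nat \<Rightarrow> real" and alpha :: "nat \<Rightarrow> real"
    and hP hK :: "nat \<Rightarrow> real" and tau :: "nat \<Rightarrow> 'a \<Rightarrow> nat"
    and v u y ud :: "nat \<Rightarrow> 'a \<Rightarrow> real" and n1 n2 :: nat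
  assumes "prob_space M" and "taubar \<ge> 1"
    and plant: "strictly_proper_tf hP" and controller: "proper_tf hK"
    and A1_indep: "prob_space.indep_vars M (\<lambda>_. count_space UNIV) tau UNIV"
    and A1_range: "\<forall>k. \<forall>\<omega>\<in>space M. tau k \<omega> \<le> taubar"
    and A1_dist: "\<forall>k. \<forall>i\<le>taubar. measure M {\<omega>\<in>space M. tau k \<omega> = i} = p i"
    and A1_sum: "(\<Sum>i\<le>taubar. p i) = 1"
    and A2: "prob_space.indep_set M
           (sets (vimage_algebra (space M) (\<lambda>\<omega> k. v k \<omega>) (PiM UNIV (\<lambda>_. borel))))
           (sets (vimage_algebra (space M) (\<lambda>\<omega> k. tau k \<omega>) (PiM UNIV (\<lambda>_. count_space UNIV))))"
    and receiver: "\<forall>\<omega>\<in>space M. \<forall>k. ud k \<omega> = receiver_output taubar alpha (\<lambda>j. tau j \<omega>) (\<lambda>j. u j \<omega>) k"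
    and plant_eq: "\<forall>\<omega>\<in>space M. \<forall>k. y k \<omega> = lti_response hP (\<lambda>j. v j \<omega> + ud j \<omega>) k"
    and ctrl_eq: "\<forall>\<omega>\<in>space M. \<forall>k. u k \<omega> = lti_response hK (\<lambda>j. y j \<omega>) k"
    and "n2 \<le> n1"
  shows "prob_space.indep_set M
           (sets (vimage_algebra (space M) (tau n1) (count_space UNIV)))
           (sets (vimage_algebra (space M) (\<lambda>\<omega>. (u n1 \<omega>, u n2 \<omega>)) borel))"
proof -
  interpret P: prob_space M by fact
  define V where "V = (\<lambda>\<omega> k. v k \<omega>)"
  define T where "T = (\<lambda>\<omega> k. tau k \<omega>)"
  define R where "R = (\<lambda>\<omega>. restrict (\<lambda>j. tau j \<omega>) {..<n1})"
  define RA where "RA = (\<lambda>\<omega>. restrict (\<lambda>j. tau j \<omega>) {n1})"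
  define Sv where "Sv = sets (vimage_algebra (space M) V (PiM UNIV (\<lambda>_. (borel :: real measure))))"
  define St where "St = sets (vimage_algebra (space M) T (PiM UNIV (\<lambda>_. count_space (UNIV :: nat set))))"
  define Sa where "Sa = sets (vimage_algebra (space M) (tau n1) (count_space UNIV))"
  define Sc where "Sc = sets (vimage_algebra (space M) R (PiM {..<n1} (\<lambda>_. count_space (UNIV :: nat set))))"
  define G where "G = {b \<inter> c | b c. b \<in> Sv \<and> c \<in> Sc}"
  define N where "N = sigma (space M) G"
  have A2': "P.indep_set Sv St" using A2 unfolding Sv_def St_def V_def T_def .
  have SvE: "Sv \<subseteq> P.events" using P.indep_setD_ev1[OF A2'] .
  have StE: "St \<subseteq> P.events" using P.indep_setD_ev2[OF A2'] .
  have ScSt: "Sc \<subseteq> St"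
    unfolding Sc_def St_def R_def T_def
    using vimage_sub[of "\<lambda>\<omega> k. tau k \<omega>" "space M" "PiM UNIV (\<lambda>_. count_space UNIV)"
        "\<lambda>f. restrict f {..<n1}" "PiM {..<n1} (\<lambda>_. count_space UNIV)"]
      measurable_restrict_subset[of "{..<n1}" UNIV]
    by (auto simp: space_PiM)
  have SaSt: "Sa \<subseteq> St"
    unfolding Sa_def St_def T_def
    using vimage_sub[of "\<lambda>\<omega> k. tau k \<omega>" "space M" "PiM UNIV (\<lambda>_. count_space UNIV)"
        "\<lambda>f. f n1" "count_space UNIV"]
      measurable_component_singleton[of n1 UNIV "\<lambda>_. count_space UNIV"]
    by (auto simp: space_PiM)
  have indep_ac: "P.indep_set Sa Sc"
  proof -
    have iv: "P.indep_var (PiM {n1} (\<lambda>_. count_space UNIV)) RA (PiM {..<n1} (\<lambda>_. count_space UNIV)) R"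
      using P.indep_var_restrict[OF A1_indep, of "{n1}" "{..<n1}"] unfolding RA_def R_def by auto
    then have i2: "P.indep_set (sets (vimage_algebra (space M) RA (PiM {n1} (\<lambda>_. count_space (UNIV :: nat set)))))
       (sets (vimage_algebra (space M) R (PiM {..<n1} (\<lambda>_. count_space (UNIV :: nat set)))))"
      by (simp add: P.indep_var_eq sets_vimage_algebra)
    have "Sa \<subseteq> sets (vimage_algebra (space M) RA (PiM {n1} (\<lambda>_. count_space (UNIV :: nat set))))"
    proof -
      have "sets (vimage_algebra (space M) (\<lambda>x. RA x n1) (count_space UNIV))
          \<subseteq> sets (vimage_algebra (space M) RA (PiM {n1} (\<lambda>_. count_space (UNIV :: nat set))))"
      proof (rule vimage_sub)
        show "RA \<in> space M \<rightarrow> space (PiM {n1} (\<lambda>_. count_space (UNIV :: nat set)))"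
          unfolding RA_def space_PiM by (intro funcsetI restrict_PiE) simp
        show "(\<lambda>f. f n1) \<in> measurable (PiM {n1} (\<lambda>_. count_space (UNIV :: nat set))) (count_space UNIV)"
          by (rule measurable_component_singleton) simp
      qed
      moreover have "(\<lambda>x. RA x n1) = tau n1" by (auto simp: RA_def)
      ultimately show ?thesis unfolding Sa_def by simp
    qed
    with i2 show ?thesis unfolding Sc_def P.indep_sets2_eq by blast
  qed
  have key: "P.indep_set Sa G"
    unfolding P.indep_sets2_eq
  proof (intro conjI ballI)
    show "Sa \<subseteq> P.events" using SaSt StE by auto
    show "G \<subseteq> P.events" using SvE ScSt StE unfolding G_def by auto
    fix a g assume a: "a \<in> Sa" and g: "g \<in> G"
    then obtain b c where g': "g = b \<inter> c" and b: "b \<in> Sv" and c: "c \<in> Sc" unfolding G_def by auto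
    have acSt: "a \<inter> c \<in> St" using a c SaSt ScSt unfolding St_def by auto
    have "P.prob (a \<inter> g) = P.prob (b \<inter> (a \<inter> c))" unfolding g' by (simp add: Int_ac)
    also have "\<dots> = P.prob b * P.prob (a \<inter> c)" using P.indep_setD[OF A2' b acSt] .
    also have "\<dots> = P.prob b * (P.prob a * P.prob c)" using P.indep_setD[OF indep_ac a c] by simp
    also have "\<dots> = P.prob a * (P.prob b * P.prob c)" by simp
    also have "P.prob b * P.prob c = P.prob g" unfolding g' using P.indep_setD[OF A2' b] c ScSt by auto
    finally show "P.prob (a \<inter> g) = P.prob a * P.prob g" .
  qed
  have stA: "Int_stable Sa" unfolding Sa_def by (rule sets.Int_stable)
  have stG: "Int_stable G"
  proof (rule Int_stableI)
    fix g1 g2 assume "g1 \<in> G" "g2 \<in> G"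
    then obtain b1 c1 b2 c2 where e: "g1 = b1 \<inter> c1" "g2 = b2 \<inter> c2" and m: "b1 \<in> Sv" "b2 \<in> Sv" "c1 \<in> Sc" "c2 \<in> Sc"
      unfolding G_def by blast
    have "b1 \<inter> b2 \<in> Sv" using m(1,2) unfolding Sv_def by (rule sets.Int)
    moreover have "c1 \<inter> c2 \<in> Sc" using m(3,4) unfolding Sc_def by (rule sets.Int)
    moreover have "g1 \<inter> g2 = (b1 \<inter> b2) \<inter> (c1 \<inter> c2)" using e by blast
    ultimately show "g1 \<inter> g2 \<in> G" unfolding G_def by blast
  qed
  have keyS: "P.indep_set (sigma_sets (space M) Sa) (sigma_sets (space M) G)"
    by (rule P.indep_set_sigma_sets[OF key stA stG])
  have GE: "G \<subseteq> P.events" using SvE ScSt StE unfolding G_def by auto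
  have GP: "G \<subseteq> Pow (space M)" using GE sets.sets_into_space by blast
  have sN: "sets N = sigma_sets (space M) G" "space N = space M"
    using GP by (simp_all add: N_def)
  have "space M \<in> Sc" unfolding Sc_def by (metis sets.top space_vimage_algebra)
  have "space M \<in> Sv" unfolding Sv_def by (metis sets.top space_vimage_algebra)
  have Vm: "V \<in> measurable N (PiM UNIV (\<lambda>_. (borel :: real measure)))"
  proof (rule meas_from_sets)
    show "V \<in> space N \<rightarrow> space (PiM UNIV (\<lambda>_. (borel :: real measure)))" by (simp add: space_PiM)
    show "sets (vimage_algebra (space N) V (PiM UNIV (\<lambda>_. (borel :: real measure)))) \<subseteq> sets N"
    proof
      fix b assume "b \<in> sets (vimage_algebra (space N) V (PiM UNIV (\<lambda>_. (borel :: real measure))))"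
      then have b: "b \<in> Sv" using sN unfolding Sv_def by simp
      then have "b = b \<inter> space M" unfolding Sv_def using sets.sets_into_space by fastforce
      with b \<open>space M \<in> Sc\<close> have "b \<in> G" unfolding G_def by blast
      then show "b \<in> sets N" using sN by auto
    qed
  qed
  have Rm: "R \<in> measurable N (PiM {..<n1} (\<lambda>_. count_space (UNIV :: nat set)))"
  proof (rule meas_from_sets)
    show "R \<in> space N \<rightarrow> space (PiM {..<n1} (\<lambda>_. count_space (UNIV :: nat set)))" by (simp add: space_PiM R_def)
    show "sets (vimage_algebra (space N) R (PiM {..<n1} (\<lambda>_. count_space (UNIV :: nat set)))) \<subseteq> sets N"
    proof
      fix c assume "c \<in> sets (vimage_algebra (space N) R (PiM {..<n1} (\<lambda>_. count_space (UNIV :: nat set))))"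
      then have c: "c \<in> Sc" using sN unfolding Sc_def by simp
      then have "c = space M \<inter> c" unfolding Sc_def using sets.sets_into_space by fastforce
      with c \<open>space M \<in> Sv\<close> have "c \<in> G" unfolding G_def by blast
      then show "c \<in> sets N" using sN by auto
    qed
  qed
  have vm: "v k \<in> borel_measurable N" for k
  proof -
    have "(\<lambda>\<omega>. V \<omega> k) \<in> borel_measurable N"
      by (rule measurable_compose[OF Vm measurable_component_singleton]) simp
    then show ?thesis by (simp add: V_def)
  qed
  have taum: "tau j \<in> measurable N (count_space UNIV)" if "j < n1" for j
  proof -
    have "(\<lambda>\<omega>. R \<omega> j) \<in> measurable N (count_space UNIV)"
      by (rule measurable_compose[OF Rm measurable_component_singleton]) (use that in simp)
    then show ?thesis using that by (simp add: R_def)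
  qed
  have um: "u k \<in> borel_measurable N" if "k \<le> n1" for k
    using that
  proof (induction k rule: less_induct)
    case (less k)
    have udm: "ud l \<in> borel_measurable N" if "l < k" for l
    proof -
      have "(\<lambda>\<omega>. receiver_output taubar alpha (\<lambda>j. tau j \<omega>) (\<lambda>j. u j \<omega>) l) \<in> borel_measurable N"
        unfolding receiver_output_def
      proof (rule borel_measurable_sum)
        fix i assume "i \<in> {0..taubar}"
        show "(\<lambda>\<omega>. if i \<le> l then alpha i * (if tau (l - i) \<omega> = i then 1 else 0) * u (l - i) \<omega> else 0) \<in> borel_measurable N"
        proof (cases "i \<le> l")
          case True
          have t: "(\<lambda>\<omega>. (\<lambda>t. if t = i then 1 else (0::real)) (tau (l - i) \<omega>)) \<in> borel_measurable N"
          proof -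
            have tm: "tau (l - i) \<in> measurable N (count_space UNIV)" using taum that less.prems by simp
            show ?thesis by (rule measurable_compose[OF tm borel_measurable_count_space])
          qed
          have uu: "u (l - i) \<in> borel_measurable N"
            using less.IH[of "l - i"] that less.prems by simp
          show ?thesis using True t uu by simp
        qed simp
      qed
      moreover have "\<And>\<omega>. \<omega> \<in> space N \<Longrightarrow> ud l \<omega> = receiver_output taubar alpha (\<lambda>j. tau j \<omega>) (\<lambda>j. u j \<omega>) l"
        using receiver sN(2) by simp
      ultimately show ?thesis by (simp cong: measurable_cong)
    qed
    have ym: "y m \<in> borel_measurable N" if "m \<le> k" for m
    proof -
      have h0: "hP 0 = 0" using plant unfolding strictly_proper_tf_def by simp
      have "(\<lambda>\<omega>. lti_response hP (\<lambda>j. v j \<omega> + ud j \<omega>) m) \<in> borel_measurable N"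
        unfolding lti_response_def
      proof (rule borel_measurable_sum)
        fix i assume "i \<in> {..m}"
        show "(\<lambda>\<omega>. hP i * (v (m - i) \<omega> + ud (m - i) \<omega>)) \<in> borel_measurable N"
        proof (cases "i = 0")
          case True
          then show ?thesis using h0 by simp
        next
          case False
          have "ud (m - i) \<in> borel_measurable N" using udm[of "m - i"] False that \<open>i \<in> {..m}\<close> by simp
          then show ?thesis using vm[of "m - i"] by simp
        qed
      qed
      moreover have "\<And>\<omega>. \<omega> \<in> space N \<Longrightarrow> y m \<omega> = lti_response hP (\<lambda>j. v j \<omega> + ud j \<omega>) m"
        using plant_eq sN(2) by simp
      ultimately show ?thesis by (simp cong: measurable_cong)
    qed
    have "(\<lambda>\<omega>. lti_response hK (\<lambda>j. y j \<omega>) k) \<in> borel_measurable N"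
      unfolding lti_response_def
      by (rule borel_measurable_sum) (use ym in simp)
    moreover have "\<And>\<omega>. \<omega> \<in> space N \<Longrightarrow> u k \<omega> = lti_response hK (\<lambda>j. y j \<omega>) k"
      using ctrl_eq sN(2) by simp
    ultimately show ?case by (simp cong: measurable_cong)
  qed
  have pm: "(\<lambda>\<omega>. (u n1 \<omega>, u n2 \<omega>)) \<in> borel_measurable N"
  proof -
    have "(\<lambda>\<omega>. (u n1 \<omega>, u n2 \<omega>)) \<in> measurable N (borel \<Otimes>\<^sub>M borel)"
      using um[of n1] um[of n2] \<open>n2 \<le> n1\<close> by (intro measurable_Pair) auto
    then show ?thesis by (simp add: borel_prod)
  qed
  have sub: "sets (vimage_algebra (space M) (\<lambda>\<omega>. (u n1 \<omega>, u n2 \<omega>)) borel) \<subseteq> sigma_sets (space M) G"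
    using sets_image_in_sets[OF sN(2) pm] sN(1) by simp
  have "Sa \<subseteq> sigma_sets (space M) Sa" by (auto intro: sigma_sets.Basic)
  with keyS sub show ?thesis unfolding P.indep_sets2_eq Sa_def by blast
qed

end
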